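(* Let $\mathcal N$ be a network and $T\ge1$. For every $k\ge1$, every element of $\mathcal P_k^*$ is a path of length $k$ in $\mathcal G_k$.
   Context: A network is a triple $\mathcal N=(\mathcal L,\mathcal I,D_{\mathcal L})$ where $\mathcal L$ is a finite nonempty set of links, each $\mathcal I(l)$ is a collection of nonempty subsets of $\mathcal L$, and $D_{\mathcal L}$ assigns an integer $D_{\mathcal L}(l,l')$ to every pair with $l'\in\phi$ for some $\phi\in\mathcal I(l)$. A schedule is a map $S:\mathcal L\times\mathbb Z\to\{0,1\}$; $S(l,t)$ has a collision if there is $\phi\in\mathcal I(l)$ with $S(l',t+D_{\mathcal L}(l,l'))=1$ for all $l'\in\phi$; $S$ is collision free if no $(l,t)$ with $S(l,t)=1$ has a collision. $S[T,k]$ is the $|\mathcal L|\times T$ binary matrix with $S[T,k](l,j)=S(l,kT+j)$. The scheduling graph $(\mathcal M_T,\mathcal E_T)$ has vertex set $\mathcal M_T$ = all $|\mathcal L|\times T$ binary matrices $A$ with $A=S[T,0]$ for some collision-free $S$, and edge set $\mathcal E_T$ = all pairs $(A,B)$ with $A=S[T,0]$, $B=S[T,1]$ for some collision-free $S$. A path of length $k$ is a sequence $(A_0,\dots,A_k)$ with $(A_i,A_{i+1})\in\mathcal E_T$ for all $i$. Sequences of matrices of equal length are compared entrywise: $(A_0,\dots,A_k)\succcurlyeq(B_0,\dots,B_k)$ iff $A_i\succcurlyeq B_i$ entrywise for all $i$; $\succ$ means $\succcurlyeq$ and $\neq$. $\mathcal P_k^*$ is the set of paths of length $k$ in $(\mathcal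 M_T,\mathcal E_T)$ not strictly dominated ($\prec$) by any other path of length $k$. $\mathcal E^*$ is the set of maximal elements of $\mathcal E_T$ under this order on pairs; $\mathcal M_L^*=\{B:(B,B')\in\mathcal E^*\text{ for some }B'\}$, $\mathcal M_R^*=\{B:(B',B)\in\mathcal E^*\text{ for some }B'\}$. $A\wedge B$ is the entrywise AND of binary matrices, and $\mathcal V=\{B\wedge B': B\in\mathcal M_R^*, B'\in\mathcal M_L^*\}$. Define recursively $\mathcal U'_0=\mathcal E^*$ and, for $k\ge2$ (with $\mathcal U'_{k-2}$ already defined): $\mathcal F_k=\{(A,B\wedge B',C):(A,B)\in\mathcal U'_{k-2},(B',C)\in\mathcal E^*\}$; $\mathcal F_k^*=\{(A,B,C)\in\mathcal F_k:\text{there is no }(A,B',C)\in\mathcal F_k\text{ with }B'\succ B\}$; $\mathcal U_{k-2}=\{(A,B):(A,B,C)\in\mathcal F_k^*\text{ for some }C\}$; $\mathcal U'_{k-1}=\{(B,C):(A,B,C)\in\mathcal F_k^*\text{ for some }A\}$. A sequence $(P_0,\dots,P_k)$ is a path of length $k$ in $\mathcal G_k$ if: for $k=1$, $(P_0,P_1)\in\mathcal E^*$; for $k\ge2$, $P_0\in\mathcal M_L^*$, $P_1,\dots,P_{k-1}\in\mathcal V$, $P_k\in\mathcal M_R^*$, $(P_i,P_{i+1})\in\mathcal U_i$ for $0\le i\le k-2$, and $(P_{k-1},P_k)\in\mathcal U'_{k-1}$. *)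

theory Defs
  imports Main
begin

(* Links: the elements of a finite type 'l (L = UNIV, finite and automatically nonempty).
   Schedules: S :: 'l => int => bool  (True = 1, False = 0).
   A |L| x T binary matrix is represented as  'l => nat => bool  with all
   columns j >= T equal to False (columns are indexed 0..T-1). *)

type_synonym 'l mat = "'l \<Rightarrow> nat \<Rightarrow> bool"

definition network :: "('l::finite \<Rightarrow> 'l set set) \<Rightarrow> bool" where
  "network I \<longleftrightarrow> (\<forall>l. \<forall>\<phi>\<in>I l. \<phi> \<noteq> {})"

definition has_collision ::
  "('l \<Rightarrow> 'l set set) \<Rightarrow> ('l \<Rightarrow> 'l \<Rightarrow> int) \<Rightarrow> ('l \<Rightarrow> int \<Rightarrow> bool) \<Rightarrow> 'l \<Rightarrow> int \<Rightarrow> bool" where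
  "has_collision I D S l t \<longleftrightarrow> (\<exists>\<phi>\<in>I l. \<forall>l'\<in>\<phi>. S l' (t + D l l'))"

definition collision_free ::
  "('l \<Rightarrow> 'l set set) \<Rightarrow> ('l \<Rightarrow> 'l \<Rightarrow> int) \<Rightarrow> ('l \<Rightarrow> int \<Rightarrow> bool) \<Rightarrow> bool" where
  "collision_free I D S \<longleftrightarrow> (\<forall>l t. S l t \<longrightarrow> \<not> has_collision I D S l t)"

definition block :: "('l \<Rightarrow> int \<Rightarrow> bool) \<Rightarrow> nat \<Rightarrow> int \<Rightarrow> 'l mat" where
  "block S T k = (\<lambda>l j. j < T \<and> S l (k * int T + int j))"

definition MT :: "('l \<Rightarrow> 'l set set) \<Rightarrow> ('l \<Rightarrow> 'l \<Rightarrow> int) \<Rightarrow> nat \<Rightarrow> 'l mat set" where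
  "MT I D T = {A. \<exists>S. collision_free I D S \<and> A = block S T 0}"

definition ET :: "('l \<Rightarrow> 'l set set) \<Rightarrow> ('l \<Rightarrow> 'l \<Rightarrow> int) \<Rightarrow> nat \<Rightarrow> ('l mat \<times> 'l mat) set" where
  "ET I D T = {(A, B). \<exists>S. collision_free I D S \<and> A = block S T 0 \<and> B = block S T 1}"

definition mle :: "'l mat \<Rightarrow> 'l mat \<Rightarrow> bool" where
  "mle A B \<longleftrightarrow> (\<forall>l j. A l j \<longrightarrow> B l j)"

definition mless :: "'l mat \<Rightarrow> 'l mat \<Rightarrow> bool" where
  "mless A B \<longleftrightarrow> mle A B \<and> A \<noteq> B"

definition mand :: "'l mat \<Rightarrow> 'l mat \<Rightarrow> 'l mat" where
  "mand A B = (\<lambda>l j. A l j \<and> B l j)"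

definition seq_le :: "'l mat list \<Rightarrow> 'l mat list \<Rightarrow> bool" where
  "seq_le P Q \<longleftrightarrow> length P = length Q \<and> (\<forall>i < length P. mle (P ! i) (Q ! i))"

definition seq_less :: "'l mat list \<Rightarrow> 'l mat list \<Rightarrow> bool" where
  "seq_less P Q \<longleftrightarrow> seq_le P Q \<and> P \<noteq> Q"

definition is_path :: "('l mat \<times> 'l mat) set \<Rightarrow> nat \<Rightarrow> 'l mat list \<Rightarrow> bool" where
  "is_path E k P \<longleftrightarrow> length P = Suc k \<and> (\<forall>i < k. (P ! i, P ! Suc i) \<in> E)"

definition Pstar :: "('l \<Rightarrow> 'l set set) \<Rightarrow> ('l \<Rightarrow> 'l \<Rightarrow> int) \<Rightarrow> nat \<Rightarrow> nat \<Rightarrow> 'l mat list set" where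
  "Pstar I D T k = {P. is_path (ET I D T) k P \<and>
      \<not> (\<exists>Q. is_path (ET I D T) k Q \<and> seq_less P Q)}"

definition Estar :: "('l \<Rightarrow> 'l set set) \<Rightarrow> ('l \<Rightarrow> 'l \<Rightarrow> int) \<Rightarrow> nat \<Rightarrow> ('l mat \<times> 'l mat) set" where
  "Estar I D T = {(A, B). (A, B) \<in> ET I D T \<and>
      \<not> (\<exists>A' B'. (A', B') \<in> ET I D T \<and> seq_less [A, B] [A', B'])}"

definition Mleft_star :: "('l \<Rightarrow> 'l set set) \<Rightarrow> ('l \<Rightarrow> 'l \<Rightarrow> int) \<Rightarrow> nat \<Rightarrow> 'l mat set" where
  "Mleft_star I D T = {B. \<exists>B'. (B, B') \<in> Estar I D T}"

definition Mright_star :: "('l \<Rightarrow> 'l set set) \<Rightarrow> ('l \<Rightarrow> 'l \<Rightarrow> int) \<Rightarrow> nat \<Rightarrow> 'l mat set" where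
  "Mright_star I D T = {B. \<exists>B'. (B', B) \<in> Estar I D T}"

definition Vset :: "('l \<Rightarrow> 'l set set) \<Rightarrow> ('l \<Rightarrow> 'l \<Rightarrow> int) \<Rightarrow> nat \<Rightarrow> 'l mat set" where
  "Vset I D T = {mand B B' | B B'. B \<in> Mright_star I D T \<and> B' \<in> Mleft_star I D T}"

definition F_of :: "('l mat \<times> 'l mat) set \<Rightarrow> ('l mat \<times> 'l mat) set \<Rightarrow> ('l mat \<times> 'l mat \<times> 'l mat) set" where
  "F_of Es U = {(A, mand B B', C) | A B B' C. (A, B) \<in> U \<and> (B', C) \<in> Es}"

definition Fstar_of :: "('l mat \<times> 'l mat) set \<Rightarrow> ('l mat \<times> 'l mat) set \<Rightarrow> ('l mat \<times> 'l mat \<times> 'l mat) set" where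
  "Fstar_of Es U = {(A, B, C). (A, B, C) \<in> F_of Es U \<and>
      \<not> (\<exists>B'. (A, B', C) \<in> F_of Es U \<and> mless B B')}"

(* Uprime I D T n = U'_n ;  F_{n+2} = F_of E^* U'_n *)
fun Uprime :: "('l \<Rightarrow> 'l set set) \<Rightarrow> ('l \<Rightarrow> 'l \<Rightarrow> int) \<Rightarrow> nat \<Rightarrow> nat \<Rightarrow> ('l mat \<times> 'l mat) set" where
  "Uprime I D T 0 = Estar I D T"
| "Uprime I D T (Suc n) = {(B, C). \<exists>A. (A, B, C) \<in> Fstar_of (Estar I D T) (Uprime I D T n)}"

(* Uset I D T n = U_n, obtained from F^*_{n+2} *)
definition Uset :: "('l \<Rightarrow> 'l set set) \<Rightarrow> ('l \<Rightarrow> 'l \<Rightarrow> int) \<Rightarrow> nat \<Rightarrow> nat \<Rightarrow> ('l mat \<times> 'l mat) set" where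
  "Uset I D T n = {(A, B). \<exists>C. (A, B, C) \<in> Fstar_of (Estar I D T) (Uprime I D T n)}"

definition path_Gk :: "('l \<Rightarrow> 'l set set) \<Rightarrow> ('l \<Rightarrow> 'l \<Rightarrow> int) \<Rightarrow> nat \<Rightarrow> nat \<Rightarrow> 'l mat list \<Rightarrow> bool" where
  "path_Gk I D T k P \<longleftrightarrow> length P = Suc k \<and>
    (if k = 1 then (P ! 0, P ! 1) \<in> Estar I D T
     else 2 \<le> k \<and>
       P ! 0 \<in> Mleft_star I D T \<and>
       (\<forall>i. 1 \<le> i \<and> i \<le> k - 1 \<longrightarrow> P ! i \<in> Vset I D T) \<and>
       P ! k \<in> Mright_star I D T \<and>
       (\<forall>i. i \<le> k - 2 \<longrightarrow> (P ! i, P ! Suc i) \<in> Uset I D T i) \<and>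
       (P ! (k - 1), P ! k) \<in> Uprime I D T (k - 1))"

end

theory Submission
  imports Defs "HOL-Library.Product_Order"
begin

lemma mle_iff: "mle A B \<longleftrightarrow> A \<le> B"
  by (auto simp: mle_def le_fun_def)

lemma mand_eq: "mand A B = inf A B"
  by (auto simp: mand_def inf_fun_def)

lemma mless_iff: "mless A B \<longleftrightarrow> A < B"
  by (auto simp: mless_def mle_iff less_le)

lemma all_less2: "(\<forall>i<Suc (Suc 0). Q i) \<longleftrightarrow> Q 0 \<and> Q (Suc 0)"
proof
  assume "Q 0 \<and> Q (Suc 0)"
  then show "\<forall>i<Suc (Suc 0). Q i"
    by (metis One_nat_def less_2_cases numeral_2_eq_2)
qed auto

lemma seq_le2: "seq_le [A, B] [A', B'] \<longleftrightarrow> A \<le> A' \<and> B \<le> B'"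
  unfolding seq_le_def mle_iff by (simp only: length_Cons list.size all_less2) simp

lemma seq_less2: "seq_less [A, B] [A', B'] \<longleftrightarrow> (A, B) < (A', B')"
  unfolding seq_less_def seq_le2 less_le less_eq_prod_def by auto

lemma cf_mono:
  assumes "collision_free I D S" "\<And>l t. S' l t \<Longrightarrow> S l t"
  shows "collision_free I D S'"
  using assms unfolding collision_free_def has_collision_def by blast

lemma ET_down:
  assumes "(A, B) \<in> ET I D T" "A' \<le> A" "B' \<le> B"
  shows "(A', B') \<in> ET I D T"
proof -
  obtain S where S: "collision_free I D S" "A = block S T 0" "B = block S T 1"
    using assms(1) by (auto simp: ET_def)
  define S' where "S' = (\<lambda>l t. S l t \<and> (if 0 \<le> t \<and> t < int T then A' l (nat t)
      else if int T \<le> t \<and> t < 2 * int T then B' l (nat (t - int T)) else False))"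
  have "collision_free I D S'"
    by (rule cf_mono[OF S(1)]) (simp add: S'_def)
  moreover have "A' = block S' T 0"
  proof (intro ext)
    fix l j
    show "A' l j = block S' T 0 l j"
      using assms(2) S(2) by (auto simp: block_def S'_def le_fun_def)
  qed
  moreover have "B' = block S' T 1"
  proof (intro ext)
    fix l j
    show "B' l j = block S' T 1 l j"
      using assms(3) S(3) by (auto simp: block_def S'_def le_fun_def)
  qed
  ultimately show ?thesis by (auto simp: ET_def)
qed

lemma finite_bnd: "finite {A :: ('l::finite) mat. \<forall>l j. A l j \<longrightarrow> j < T}"
proof -
  have "{A :: 'l mat. \<forall>l j. A l j \<longrightarrow> j < T} \<subseteq> (\<lambda>X l j. (l, j) \<in> X) ` Pow (UNIV \<times> {..<T})"
  proof
    fix A :: "'l mat" assume "A \<in> {A. \<forall>l j. A l j \<longrightarrow> j < T}"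
    then have "A = (\<lambda>l j. (l, j) \<in> {(l, j). A l j})" "{(l, j). A l j} \<in> Pow (UNIV \<times> {..<T})"
      by auto
    then show "A \<in> (\<lambda>X l j. (l, j) \<in> X) ` Pow (UNIV \<times> {..<T})" by blast
  qed
  moreover have "finite (Pow (UNIV \<times> {..<T} :: ('l \<times> nat) set))" by simp
  ultimately show ?thesis using finite_subset by blast
qed

lemma finite_ET: "finite (ET I D T :: (('l::finite) mat \<times> 'l mat) set)"
proof -
  have "ET I D T \<subseteq> {A :: 'l mat. \<forall>l j. A l j \<longrightarrow> j < T} \<times> {A :: 'l mat. \<forall>l j. A l j \<longrightarrow> j < T}"
    by (auto simp: ET_def block_def)
  then show ?thesis using finite_bnd finite_subset by blast
qed

lemma Estar_sub: "Estar I D T \<subseteq> ET I D T"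
  by (auto simp: Estar_def)

lemma ET_down':
  assumes "(A, B) \<in> Estar I D T" "A' \<le> A" "B' \<le> B"
  shows "(A', B') \<in> ET I D T"
  using ET_down[of A B I D T A' B'] assms Estar_sub by blast

lemma dom_Estar:
  fixes A B :: "('l::finite) mat"
  assumes "(A, B) \<in> ET I D (T::nat)"
  shows "\<exists>A' B'. (A', B') \<in> Estar I D T \<and> A \<le> A' \<and> B \<le> B'"
proof -
  obtain m where m: "m \<in> ET I D T" "(A, B) \<le> m" "\<forall>b\<in>ET I D T. m \<le> b \<longrightarrow> m = b"
    using finite_has_maximal2[OF finite_ET assms] by blast
  obtain A' B' where mm: "m = (A', B')" by (cases m)
  have "(A', B') \<in> Estar I D T"
    using m unfolding mm Estar_def seq_less2 by (auto simp: less_le)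
  then show ?thesis using m(2) mm by (auto simp: less_eq_prod_def)
qed

lemma Uprime_sub: "Uprime I D T n \<subseteq> ET I D T"
proof (cases n)
  case 0 then show ?thesis using Estar_sub by simp
next
  case (Suc m)
  show ?thesis
  proof
    fix x assume "x \<in> Uprime I D T n"
    then obtain B C A where x: "x = (B, C)" "(A, B, C) \<in> Fstar_of (Estar I D T) (Uprime I D T m)"
      using Suc by (cases x) auto
    then obtain B1 B2 where "B = mand B1 B2" "(B2, C) \<in> Estar I D T"
      by (auto simp: Fstar_of_def F_of_def)
    then show "x \<in> ET I D T"
      using x Estar_sub ET_down[of B2 C I D T B C] by (auto simp: mand_eq)
  qed
qed

lemma path_upd:
  assumes "is_path E k P" "i \<le> k" "0 < i \<Longrightarrow> (P ! (i - 1), X) \<in> E"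
    "i < k \<Longrightarrow> (X, P ! Suc i) \<in> E"
  shows "is_path E k (P[i := X])"
  unfolding is_path_def
proof (intro conjI allI impI)
  show "length (P[i := X]) = Suc k" using assms(1) by (simp add: is_path_def)
next
  fix j assume j: "j < k"
  have len: "length P = Suc k" using assms(1) by (simp add: is_path_def)
  have e: "(P ! j, P ! Suc j) \<in> E" using assms(1) j by (simp add: is_path_def)
  show "(P[i := X] ! j, P[i := X] ! Suc j) \<in> E"
  proof (cases "j = i")
    case True then show ?thesis using assms(4) j len by simp
  next
    case False
    show ?thesis
    proof (cases "Suc j = i")
      case True then show ?thesis using assms(3) j len by auto
    next
      case False2: False
      then show ?thesis using False e len j by simp
    qed
  qed
qed

lemma repl:
  assumes "P \<in> Pstar I D T k" "i \<le> k" "P ! i \<le> X"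
    "0 < i \<Longrightarrow> (P ! (i - 1), X) \<in> ET I D T"
    "i < k \<Longrightarrow> (X, P ! Suc i) \<in> ET I D T"
  shows "X = P ! i"
proof (rule ccontr)
  assume ne: "X \<noteq> P ! i"
  have p: "is_path (ET I D T) k P" using assms(1) by (simp add: Pstar_def)
  have len: "length P = Suc k" using p by (simp add: is_path_def)
  have q: "is_path (ET I D T) k (P[i := X])" using path_upd[OF p assms(2) assms(4) assms(5)] .
  have "seq_less P (P[i := X])"
    unfolding seq_less_def seq_le_def
  proof (intro conjI allI impI)
    show "length P = length (P[i := X])" by simp
  next
    fix j assume "j < length P"
    then show "mle (P ! j) (P[i := X] ! j)"
      using assms(3) by (cases "j = i") (auto simp: mle_iff)
  next
    show "P \<noteq> P[i := X]" using ne len assms(2)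
      by (metis le_imp_less_Suc nth_list_update_eq)
  qed
  then show False using assms(1) q by (auto simp: Pstar_def)
qed

theorem lemma7:
  fixes I :: "'l::finite \<Rightarrow> 'l set set" and D :: "'l \<Rightarrow> 'l \<Rightarrow> int" and T k :: nat
  assumes "network I" and "T \<ge> 1" and "k \<ge> 1"
      and "P \<in> Pstar I D T k"
  shows "path_Gk I D T k P"
proof -
  let ?E = "ET I D T" and ?Es = "Estar I D T"
  have p: "is_path ?E k P" using assms(4) by (simp add: Pstar_def)
  have len: "length P = Suc k" using p by (simp add: is_path_def)
  have edge: "\<And>i. i < k \<Longrightarrow> (P ! i, P ! Suc i) \<in> ?E" using p by (simp add: is_path_def)
  note R = repl[OF assms(4)]
  show ?thesis
  proof (cases "k = 1")
    case True
    obtain A' B' where ab: "(A', B') \<in> ?Es" "P ! 0 \<le> A'" "P ! 1 \<le> B'"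
      using dom_Estar[OF edge[of 0]] True by auto
    have e1: "(A', P ! 1) \<in> ?E" using ET_down[of A' B'] ab Estar_sub by blast
    have a0: "A' = P ! 0" using R[of 0 A'] ab e1 True by auto
    have e2: "(P ! 0, B') \<in> ?E" using ab a0 Estar_sub by blast
    have b1: "B' = P ! 1" using R[of 1 B'] ab e2 True by auto
    show ?thesis using True len ab a0 b1 by (simp add: path_Gk_def)
  next
    case False
    then have k2: "2 \<le> k" using assms(3) by simp
    obtain A' B' where ab: "(A', B') \<in> ?Es" "P ! 0 \<le> A'" "P ! 1 \<le> B'"
      using dom_Estar[OF edge[of 0]] k2 by auto
    have e1: "(A', P ! 1) \<in> ?E" using ET_down[of A' B'] ab Estar_sub by blast
    have a0: "A' = P ! 0" using R[of 0 A'] ab e1 k2 by auto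
    have hML: "P ! 0 \<in> Mleft_star I D T" using ab a0 by (auto simp: Mleft_star_def)
    have sk: "Suc (k - 1) = k" "k - 1 < k" using k2 by auto
    have ek: "(P ! (k - 1), P ! k) \<in> ?E" using edge[OF sk(2)] unfolding sk(1) .
    obtain B2 C2 where bc: "(B2, C2) \<in> ?Es" "P ! (k - 1) \<le> B2" "P ! k \<le> C2"
      using dom_Estar[OF ek] by auto
    have e2: "(P ! (k - 1), C2) \<in> ?E" using ET_down[of B2 C2] bc Estar_sub by blast
    have c2: "C2 = P ! k" using R[of k C2] bc e2 k2 by auto
    have MR: "P ! k \<in> Mright_star I D T" using bc c2 by (auto simp: Mright_star_def)
    have V: "P ! i \<in> Vset I D T" if i: "1 \<le> i" "i \<le> k - 1" for i
    proof -
      have si: "Suc (i - 1) = i" "i - 1 < k" using i k2 by auto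
      have ei: "(P ! (i - 1), P ! i) \<in> ?E" using edge[OF si(2)] unfolding si(1) .
      obtain A B where AB: "(A, B) \<in> ?Es" "P ! (i - 1) \<le> A" "P ! i \<le> B"
        using dom_Estar[OF ei] by auto
      have ik: "i < k" using i k2 by linarith
      obtain B' C where BC: "(B', C) \<in> ?Es" "P ! i \<le> B'" "P ! Suc i \<le> C"
        using dom_Estar[OF edge[OF ik]] by auto
      have x1: "(P ! (i - 1), inf B B') \<in> ?E"
        by (rule ET_down'[OF AB(1)]) (use AB in auto)
      have x2: "(inf B B', P ! Suc i) \<in> ?E"
        by (rule ET_down'[OF BC(1)]) (use BC in auto)
      have vi: "inf B B' = P ! i" using R[of i "inf B B'"] AB BC x1 x2 i k2 by auto
      have hB: "B \<in> Mright_star I D T" using AB(1) by (auto simp: Mright_star_def)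
      have hB': "B' \<in> Mleft_star I D T" using BC(1) by (auto simp: Mleft_star_def)
      have vv: "P ! i = mand B B'" using vi by (simp add: mand_eq)
      show ?thesis unfolding Vset_def using vv hB hB' by blast
    qed
    have step: "\<exists>C. P ! Suc (Suc n) \<le> C \<and>
        (P ! n, P ! Suc n, C) \<in> Fstar_of ?Es (Uprime I D T n) \<and> (Suc (Suc n) = k \<longrightarrow> C = P ! k)"
      if n: "Suc n \<le> k - 1" and Y: "(P ! n, Y) \<in> Uprime I D T n" "P ! Suc n \<le> Y" for n Y
    proof -
      have nk: "Suc n < k" using n by linarith
      obtain B' C where BC: "(B', C) \<in> ?Es" "P ! Suc n \<le> B'" "P ! Suc (Suc n) \<le> C"
        using dom_Estar[OF edge[OF nk]] by blast
      have ck: "C = P ! k" if "Suc (Suc n) = k"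
      proof -
        have "(P ! (k - 1), C) \<in> ?E" by (rule ET_down'[OF BC(1)]) (use BC that in auto)
        then show ?thesis using R[of k C] BC that by auto
      qed
      have YE: "(P ! n, Y) \<in> ?E" using Y Uprime_sub by blast
      have x1: "(P ! n, inf Y B') \<in> ?E" by (rule ET_down[OF YE]) auto
      have x2: "(inf Y B', P ! Suc (Suc n)) \<in> ?E"
        by (rule ET_down'[OF BC(1)]) (use BC in auto)
      have X: "inf Y B' = P ! Suc n" using R[of "Suc n" "inf Y B'"] Y BC x1 x2 n by auto
      have inF: "(P ! n, P ! Suc n, C) \<in> F_of ?Es (Uprime I D T n)"
        unfolding F_of_def using Y(1) BC(1) X[symmetric] by (auto simp: mand_eq)
      have nomax: "\<not> (\<exists>Z. (P ! n, Z, C) \<in> F_of ?Es (Uprime I D T n) \<and> mless (P ! Suc n) Z)"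
      proof
        assume "\<exists>Z. (P ! n, Z, C) \<in> F_of ?Es (Uprime I D T n) \<and> mless (P ! Suc n) Z"
        then obtain Z Y1 B1 where Z: "Z = inf Y1 B1" "(P ! n, Y1) \<in> Uprime I D T n"
          "(B1, C) \<in> ?Es" "P ! Suc n < Z"
          by (auto simp: F_of_def mand_eq mless_iff)
        have z1: "(P ! n, Z) \<in> ?E" by (rule ET_down[OF subsetD[OF Uprime_sub Z(2)]]) (use Z in auto)
        have z2: "(Z, P ! Suc (Suc n)) \<in> ?E" by (rule ET_down'[OF Z(3)]) (use Z BC in auto)
        have "Z = P ! Suc n" using R[of "Suc n" Z] less_imp_le[OF Z(4)] z1 z2 n by auto
        then show False using Z by simp
      qed
      show ?thesis using inF nomax BC ck unfolding Fstar_of_def by auto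
    qed
    have inv: "\<exists>Y. P ! Suc n \<le> Y \<and> (P ! n, Y) \<in> Uprime I D T n" if "n \<le> k - 1" for n
      using that
    proof (induction n)
      case 0 then show ?case using ab a0 by auto
    next
      case (Suc n)
      then obtain Y where "P ! Suc n \<le> Y" "(P ! n, Y) \<in> Uprime I D T n" by auto
      then obtain C where "P ! Suc (Suc n) \<le> C" "(P ! n, P ! Suc n, C) \<in> Fstar_of ?Es (Uprime I D T n)"
        using step[of n Y] Suc.prems by auto
      then show ?case by auto
    qed
    have U: "(P ! i, P ! Suc i) \<in> Uset I D T i" if "i \<le> k - 2" for i
    proof -
      have i1: "i \<le> k - 1" "Suc i \<le> k - 1" using that k2 by linarith+
      obtain Y where "P ! Suc i \<le> Y" "(P ! i, Y) \<in> Uprime I D T i" using inv[OF i1(1)] by blast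
      then obtain C where "(P ! i, P ! Suc i, C) \<in> Fstar_of ?Es (Uprime I D T i)"
        using step[OF i1(2)] by blast
      then show ?thesis by (auto simp: Uset_def)
    qed
    have Ulast: "(P ! (k - 1), P ! k) \<in> Uprime I D T (k - 1)"
    proof -
      obtain Y where Y: "P ! Suc (k - 2) \<le> Y" "(P ! (k - 2), Y) \<in> Uprime I D T (k - 2)"
        using inv[of "k - 2"] by (meson diff_le_mono2 one_le_numeral)
      have kk: "Suc (k - 2) \<le> k - 1" "Suc (Suc (k - 2)) = k" using k2 by linarith+
      obtain C where "C = P ! k" "(P ! (k - 2), P ! Suc (k - 2), C) \<in> Fstar_of ?Es (Uprime I D T (k - 2))"
        using step[OF kk(1) Y(2) Y(1)] kk(2) by blast
      moreover have "Suc (k - 2) = k - 1" "k - 1 = Suc (k - 2)" using k2 by auto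
      ultimately show ?thesis by (metis (mono_tags, lifting) Uprime.simps(2) case_prodI mem_Collect_eq)
    qed
    have main: "2 \<le> k \<and> P ! 0 \<in> Mleft_star I D T \<and>
       (\<forall>i. 1 \<le> i \<and> i \<le> k - 1 \<longrightarrow> P ! i \<in> Vset I D T) \<and>
       P ! k \<in> Mright_star I D T \<and>
       (\<forall>i. i \<le> k - 2 \<longrightarrow> (P ! i, P ! Suc i) \<in> Uset I D T i) \<and>
       (P ! (k - 1), P ! k) \<in> Uprime I D T (k - 1)"
      using k2 hML MR V U Ulast by blast
    show ?thesis unfolding path_Gk_def if_not_P[OF False] using len main by blast
  qed
qed

end
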